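(* The Grötzsch graph $M(C_5)$ has odd girth $5$ and admits an orientation in which every $5$-cycle (i.e., every shortest odd cycle) is alternating.
   Context: For a graph $G$, the Mycielskian $M(G)$ has vertex set $\{(v,0),(v,1):v\in V(G)\}\cup\{z\}$, with $(u,i)$ adjacent to $(v,j)$ iff $\{u,v\}\in E(G)$ and ($|i-j|=1$ or $i=j=0$), and $z$ adjacent to every $(v,1)$. The Grötzsch graph is $M(C_5)$. The odd girth is the length of a shortest odd cycle. An orientation assigns each edge exactly one direction. In an oriented graph, a subgraph that is a cycle is called alternating if at most one of its vertices has both positive in-degree and positive out-degree within that cycle. *)

theory Defs
  imports Main
begin

text \<open>Simple graphs are given by a vertex set V and a set E of edges,
each edge being a 2-element set of vertices.\<close>

datatype 'a mvert = MV 'a nat | MZ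

definition mycielski_V :: "'a set \<Rightarrow> 'a mvert set" where
  "mycielski_V V = {MV v i | v i. v \<in> V \<and> i \<in> {0, 1}} \<union> {MZ}"

definition mycielski_E :: "'a set \<Rightarrow> 'a set set \<Rightarrow> 'a mvert set set" where
  "mycielski_E V E =
     {{MV u i, MV v j} | u v i j. {u, v} \<in> E \<and> i \<in> {0, 1} \<and> j \<in> {0, 1} \<and>
         ((i = 0 \<and> j = 1) \<or> (i = 1 \<and> j = 0) \<or> (i = 0 \<and> j = 0))}
     \<union> {{MZ, MV v 1} | v. v \<in> V}"

definition C5_V :: "nat set" where
  "C5_V = {0..<5}"

definition C5_E :: "nat set set" where
  "C5_E = {{i, (i + 1) mod 5} | i. i < 5}"

definition groetzsch_V :: "nat mvert set" where
  "groetzsch_V = mycielski_V C5_V"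

definition groetzsch_E :: "nat mvert set set" where
  "groetzsch_E = mycielski_E C5_V C5_E"

definition is_cycle :: "'v set \<Rightarrow> 'v set set \<Rightarrow> 'v list \<Rightarrow> bool" where
  "is_cycle V E cs \<longleftrightarrow> length cs \<ge> 3 \<and> distinct cs \<and> set cs \<subseteq> V \<and>
     (\<forall>i < length cs. {cs ! i, cs ! ((i + 1) mod length cs)} \<in> E)"

definition odd_girth :: "'v set \<Rightarrow> 'v set set \<Rightarrow> nat" where
  "odd_girth V E = (LEAST k. odd k \<and> (\<exists>cs. is_cycle V E cs \<and> length cs = k))"

definition is_orientation :: "'v set set \<Rightarrow> ('v \<times> 'v) set \<Rightarrow> bool" where
  "is_orientation E D \<longleftrightarrow> (\<forall>(u, v) \<in> D. {u, v} \<in> E) \<and>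
     (\<forall>u v. {u, v} \<in> E \<longrightarrow> ((u, v) \<in> D \<longleftrightarrow> (v, u) \<notin> D))"

text \<open>Within the cycle cs, vertex cs!i has the two cycle neighbours
cs!((i+k-1) mod k) and cs!((i+1) mod k).\<close>

definition cyc_in_pos :: "('v \<times> 'v) set \<Rightarrow> 'v list \<Rightarrow> nat \<Rightarrow> bool" where
  "cyc_in_pos D cs i \<longleftrightarrow> (let k = length cs; x = cs ! i in
     (cs ! ((i + k - 1) mod k), x) \<in> D \<or> (cs ! ((i + 1) mod k), x) \<in> D)"

definition cyc_out_pos :: "('v \<times> 'v) set \<Rightarrow> 'v list \<Rightarrow> nat \<Rightarrow> bool" where
  "cyc_out_pos D cs i \<longleftrightarrow> (let k = length cs; x = cs ! i in
     (x, cs ! ((i + k - 1) mod k)) \<in> D \<or> (x, cs ! ((i + 1) mod k)) \<in> D)"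

definition alternating :: "('v \<times> 'v) set \<Rightarrow> 'v list \<Rightarrow> bool" where
  "alternating D cs \<longleftrightarrow>
     card {i. i < length cs \<and> cyc_in_pos D cs i \<and> cyc_out_pos D cs i} \<le> 1"

end

theory Submission
  imports Defs
begin

definition Ep :: "(nat mvert \<times> nat mvert) list" where
"Ep = [(MV 0 0, MV 1 0), (MV 0 0, MV 1 1), (MV 0 1, MV 1 0), (MV 1 0, MV 2 0), (MV 1 0, MV 2 1), (MV 1 1, MV 2 0), (MV 2 0, MV 3 0), (MV 2 0, MV 3 1), (MV 2 1, MV 3 0), (MV 3 0, MV 4 0), (MV 3 0, MV 4 1), (MV 3 1, MV 4 0), (MV 4 0, MV 0 0), (MV 4 0, MV 0 1), (MV 4 1, MV 0 0), (MZ, MV 0 1), (MZ, MV 1 1), (MZ, MV 2 1), (MZ, MV 3 1), (MZ, MV 4 1)]"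

definition El :: "(nat mvert \<times> nat mvert) list" where
"El = Ep @ map (\<lambda>(u,v). (v,u)) Ep"

definition Dl :: "(nat mvert \<times> nat mvert) list" where
"Dl = [(MV 0 0, MV 1 0), (MV 0 0, MV 1 1), (MV 0 0, MV 4 1), (MV 1 0, MV 0 1), (MV 2 0, MV 1 0), (MV 2 0, MV 1 1), (MV 2 0, MV 3 0), (MV 2 0, MV 3 1), (MV 2 1, MV 1 0), (MV 2 1, MV 3 0), (MV 4 0, MV 0 0), (MV 4 0, MV 0 1), (MV 4 0, MV 3 0), (MV 4 0, MV 3 1), (MV 4 1, MV 3 0), (MZ, MV 0 1), (MZ, MV 1 1), (MZ, MV 2 1), (MZ, MV 3 1), (MZ, MV 4 1)]"

definition Vl :: "nat mvert list" where
"Vl = [MV 0 0, MV 0 1, MV 1 0, MV 1 1, MV 2 0, MV 2 1, MV 3 0, MV 3 1, MV 4 0, MV 4 1, MZ]"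

definition adj :: "nat mvert \<Rightarrow> nat mvert list" where
"adj u = map snd (filter (\<lambda>p. fst p = u) El)"

lemma C5E: "C5_E = {{0,1},{1,2},{2,3},{3,4},{4,0}}"
proof -
  have a: "{i::nat. i < 5} = {0,1,2,3,4}" by auto
  have b: "C5_E = (\<lambda>i. {i, (i+1) mod 5}) ` {i. i<5}" unfolding C5_E_def by blast
  show ?thesis unfolding b a by (simp add: insert_commute del: One_nat_def)
qed

lemma V_eq: "groetzsch_V = set Vl"
  unfolding groetzsch_V_def mycielski_V_def Vl_def C5_V_def
  by (auto simp: less_Suc_eq)


definition P10 :: "(nat \<times> nat) list" where
"P10 = [(0,1),(1,0),(1,2),(2,1),(2,3),(3,2),(3,4),(4,3),(4,0),(0,4)]"

lemma C5E_mem: "{u,v} \<in> C5_E \<longleftrightarrow> (u,v) \<in> set P10"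
  unfolding C5E P10_def by (auto simp: doubleton_eq_iff)

definition L4 :: "(nat \<times> nat \<times> nat \<times> nat) list" where
"L4 = [(u,v,i,j). (u,v) \<leftarrow> P10, (i,j) \<leftarrow> [(0,1),(1,0),(0,0)]]"

lemma L4_mem: "(u,v,i,j) \<in> set L4 \<longleftrightarrow> (u,v) \<in> set P10 \<and> (i,j) \<in> {(0,1),(1,0),(0,0)}"
  unfolding L4_def by auto

lemma map4_mem: "x \<in> set (map (\<lambda>(u,v,i,j). f u v i j) L) \<longleftrightarrow> (\<exists>u v i j. (u,v,i,j) \<in> set L \<and> x = f u v i j)"
  by force

lemma E_L: "groetzsch_E = set (map (\<lambda>(u,v,i,j). {MV u i, MV v j}) L4) \<union> set (map (\<lambda>v. {MZ, MV v 1}) [0,1,2,3,4])"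
proof -
  have 1: "(\<exists>u v i j. x = {MV u i, MV v j} \<and> {u, v} \<in> C5_E \<and> i \<in> {0, 1} \<and> j \<in> {0, 1} \<and>
         ((i = 0 \<and> j = 1) \<or> (i = 1 \<and> j = 0) \<or> (i = 0 \<and> j = 0))) \<longleftrightarrow>
        x \<in> set (map (\<lambda>(u,v,i,j). {MV u i, MV v j}) L4)" for x
    unfolding C5E_mem map4_mem L4_mem by blast
  have 2: "(\<exists>v. x = {MZ, MV v 1} \<and> v \<in> {0..<5::nat}) \<longleftrightarrow> x \<in> set (map (\<lambda>v. {MZ, MV v 1}) [0,1,2,3,4])" for x
    by (auto simp: less_Suc_eq)
  show ?thesis
    unfolding groetzsch_E_def mycielski_E_def C5_V_def
    apply (rule set_eqI)
    apply (simp only: Un_iff mem_Collect_eq 1 2)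
    done
qed

lemma E_eq: "groetzsch_E = set (map (\<lambda>(u,v). {u,v}) Ep)"
  unfolding E_L
  apply (rule equalityI)
  apply (simp add: L4_def P10_def Ep_def doubleton_eq_iff)
  apply (simp add: L4_def P10_def Ep_def doubleton_eq_iff)
  done


lemma E_mem: "{u,v} \<in> groetzsch_E \<longleftrightarrow> (u,v) \<in> set El"
  unfolding E_eq El_def by (auto simp: doubleton_eq_iff)

lemma adj_mem: "v \<in> set (adj u) \<longleftrightarrow> (u,v) \<in> set El"
  unfolding adj_def by force

lemma adj_simps:
  "adj MZ = [MV 0 1, MV 1 1, MV 2 1, MV 3 1, MV 4 1]"
  "adj (MV 0 0) = [MV 1 0, MV 1 1, MV 4 0, MV 4 1]"
  "adj (MV 1 0) = [MV 2 0, MV 2 1, MV 0 0, MV 0 1]"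
  "adj (MV 2 0) = [MV 3 0, MV 3 1, MV 1 0, MV 1 1]"
  "adj (MV 3 0) = [MV 4 0, MV 4 1, MV 2 0, MV 2 1]"
  "adj (MV 4 0) = [MV 0 0, MV 0 1, MV 3 0, MV 3 1]"
  "adj (MV 0 1) = [MV 1 0, MV 4 0, MZ]"
  "adj (MV 1 1) = [MV 2 0, MV 0 0, MZ]"
  "adj (MV 2 1) = [MV 3 0, MV 1 0, MZ]"
  "adj (MV 3 1) = [MV 4 0, MV 2 0, MZ]"
  "adj (MV 4 1) = [MV 0 0, MV 3 0, MZ]"
  by (simp_all add: adj_def El_def Ep_def)



definition rk :: "nat mvert \<Rightarrow> nat" where
"rk x = (case x of MZ \<Rightarrow> 10 | MV v i \<Rightarrow> (if i = 0 then [0,3,7,5,8] ! v else [1,4,2,6,9] ! v))"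

lemma rk_simps:
  "rk MZ = 10"
  "rk (MV 0 0) = 0" "rk (MV 1 0) = 3" "rk (MV 2 0) = 7" "rk (MV 3 0) = 5" "rk (MV 4 0) = 8"
  "rk (MV 0 1) = 1" "rk (MV 1 1) = 4" "rk (MV 2 1) = 2" "rk (MV 3 1) = 6" "rk (MV 4 1) = 9"
  by (simp_all add: rk_def)

definition Dr :: "(nat mvert \<times> nat mvert) set" where
"Dr = {(u,v). {u,v} \<in> groetzsch_E \<and> rk u < rk v}"

definition inout :: "nat \<Rightarrow> nat \<Rightarrow> nat \<Rightarrow> bool" where
"inout p x n = ((p < x \<or> n < x) \<and> (x < p \<or> x < n))"

definition altr :: "nat \<Rightarrow> nat \<Rightarrow> nat \<Rightarrow> nat \<Rightarrow> nat \<Rightarrow> bool" where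
"altr a b c d e = (length (filter id [inout e a b, inout a b c, inout b c d, inout c d e, inout d e a]) \<le> 1)"

lemma card5: "card {i. i < (5::nat) \<and> P i} = length (filter P [0,1,2,3,4])"
proof -
  have u: "[0..<5] = [0::nat,1,2,3,4]" by (simp add: upt_rec)
  have "{i. i < (5::nat) \<and> P i} = set (filter P [0..<5])"
    by auto
  then have "{i. i < (5::nat) \<and> P i} = set (filter P [0,1,2,3,4])" by (simp only: u)
  moreover have "distinct (filter P [0::nat,1,2,3,4])" by simp
  ultimately show ?thesis by (simp add: distinct_card)
qed

lemma alt_reduce:
  assumes "{a,b} \<in> groetzsch_E" "{b,c} \<in> groetzsch_E" "{c,d} \<in> groetzsch_E"
    "{d,e} \<in> groetzsch_E" "{e,a} \<in> groetzsch_E"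
    "altr (rk a) (rk b) (rk c) (rk d) (rk e)"
  shows "alternating Dr [a,b,c,d,e]"
proof -
  have r: "{b,a} \<in> groetzsch_E" "{c,b} \<in> groetzsch_E" "{d,c} \<in> groetzsch_E"
    "{e,d} \<in> groetzsch_E" "{a,e} \<in> groetzsch_E" using assms by (simp_all add: insert_commute)
  have m: "map (\<lambda>i. cyc_in_pos Dr [a,b,c,d,e] i \<and> cyc_out_pos Dr [a,b,c,d,e] i) [0,1,2,3,4] =
     [inout (rk e) (rk a) (rk b), inout (rk a) (rk b) (rk c), inout (rk b) (rk c) (rk d),
      inout (rk c) (rk d) (rk e), inout (rk d) (rk e) (rk a)]"
    using assms r
    by (simp add: cyc_in_pos_def cyc_out_pos_def Dr_def inout_def del: One_nat_def)
  have l: "length (filter P xs) = length (filter id (map P xs))" for P and xs :: "nat list"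
    by (simp add: filter_map comp_def)
  have len: "length [a,b,c,d,e] = 5" by simp
  show ?thesis
    unfolding alternating_def len card5 l m
    using assms(6) by (simp add: altr_def)
qed

lemma tri_check: "\<forall>a\<in>set Vl. \<forall>b\<in>set (adj a). \<forall>c\<in>set (adj b). a \<notin> set (adj c)"
  by (simp add: Vl_def adj_simps del: One_nat_def)

lemma cyc_check: "\<forall>a\<in>set Vl. \<forall>b\<in>set (adj a). \<forall>c\<in>set (adj b). \<forall>d\<in>set (adj c). \<forall>e\<in>set (adj d).
   (if a \<in> set (adj e) then (if distinct [a,b,c,d,e] then altr (rk a) (rk b) (rk c) (rk d) (rk e) else True) else True)"
  by (simp add: Vl_def adj_simps rk_simps altr_def inout_def del: One_nat_def)


lemma rk_El: "\<forall>(u,v)\<in>set El. rk u \<noteq> rk v"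
  by (simp add: El_def Ep_def rk_simps del: One_nat_def)

lemma orient: "is_orientation groetzsch_E Dr"
  unfolding is_orientation_def
proof (intro conjI allI impI)
  show "\<forall>(u, v)\<in>Dr. {u, v} \<in> groetzsch_E" by (auto simp: Dr_def)
next
  fix u v assume uv: "{u, v} \<in> groetzsch_E"
  then have "rk u \<noteq> rk v" using rk_El E_mem by fastforce
  moreover have "{v,u} \<in> groetzsch_E" using uv by (simp add: insert_commute)
  ultimately show "(u, v) \<in> Dr \<longleftrightarrow> (v, u) \<notin> Dr" using uv by (auto simp: Dr_def)
qed

lemma all5: "(\<forall>i<(5::nat). P i) \<longleftrightarrow> P 0 \<and> P 1 \<and> P 2 \<and> P 3 \<and> P 4"
proof -
  have u: "[0..<5] = [0::nat,1,2,3,4]" by (simp add: upt_rec)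
  have "(\<forall>i<(5::nat). P i) \<longleftrightarrow> (\<forall>i\<in>set [0..<5]. P i)" by auto
  also have "\<dots> \<longleftrightarrow> P 0 \<and> P 1 \<and> P 2 \<and> P 3 \<and> P 4" unfolding u by simp
  finally show ?thesis .
qed

lemma all3: "(\<forall>i<(3::nat). P i) \<longleftrightarrow> P 0 \<and> P 1 \<and> P 2"
proof -
  have u: "[0..<3] = [0::nat,1,2]" by (simp add: upt_rec)
  have "(\<forall>i<(3::nat). P i) \<longleftrightarrow> (\<forall>i\<in>set [0..<3]. P i)" by auto
  also have "\<dots> \<longleftrightarrow> P 0 \<and> P 1 \<and> P 2" unfolding u by simp
  finally show ?thesis .
qed

lemma len5: "length cs = 5 \<Longrightarrow> \<exists>a b c d e. cs = [a,b,c,d,e]"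
  by (auto simp: length_Suc_conv numeral_eq_Suc)

lemma len3: "length cs = 3 \<Longrightarrow> \<exists>a b c. cs = [a,b,c]"
  by (auto simp: length_Suc_conv numeral_eq_Suc)

lemma cyc5_alt:
  assumes "is_cycle groetzsch_V groetzsch_E cs" "length cs = 5"
  shows "alternating Dr cs"
proof -
  obtain a b c d e where cs: "cs = [a,b,c,d,e]" using len5[OF assms(2)] by blast
  have c: "distinct [a,b,c,d,e]" "set [a,b,c,d,e] \<subseteq> groetzsch_V"
    "\<forall>i<5. {[a,b,c,d,e] ! i, [a,b,c,d,e] ! ((i + 1) mod 5)} \<in> groetzsch_E"
    using assms unfolding cs is_cycle_def by auto
  have E: "{a,b} \<in> groetzsch_E" "{b,c} \<in> groetzsch_E" "{c,d} \<in> groetzsch_E"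
    "{d,e} \<in> groetzsch_E" "{e,a} \<in> groetzsch_E"
    using c(3) unfolding all5 by simp_all
  have A: "a \<in> set Vl" "b \<in> set (adj a)" "c \<in> set (adj b)" "d \<in> set (adj c)" "e \<in> set (adj d)"
    "a \<in> set (adj e)"
    using c(2) E unfolding V_eq adj_mem E_mem by auto
  have "altr (rk a) (rk b) (rk c) (rk d) (rk e)"
    using cyc_check A c(1) by fastforce
  then show ?thesis unfolding cs using alt_reduce E by blast
qed

lemma no_tri:
  assumes "is_cycle groetzsch_V groetzsch_E cs" "length cs = 3"
  shows False
proof -
  obtain a b c where cs: "cs = [a,b,c]" using len3[OF assms(2)] by blast
  have c: "set [a,b,c] \<subseteq> groetzsch_V"
    "\<forall>i<3. {[a,b,c] ! i, [a,b,c] ! ((i + 1) mod 3)} \<in> groetzsch_E"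
    using assms unfolding cs is_cycle_def by auto
  have E: "{a,b} \<in> groetzsch_E" "{b,c} \<in> groetzsch_E" "{c,a} \<in> groetzsch_E"
    using c(2) unfolding all3 by simp_all
  have A: "a \<in> set Vl" "b \<in> set (adj a)" "c \<in> set (adj b)" "a \<in> set (adj c)"
    using c(1) E unfolding V_eq adj_mem E_mem by auto
  show False using tri_check A by blast
qed

lemma ex5: "is_cycle groetzsch_V groetzsch_E [MV 0 0, MV 1 0, MV 2 0, MV 3 0, MV 4 0]"
proof -
  have l: "length [MV 0 0, MV 1 0, MV 2 0, MV 3 0, MV (4::nat) 0] = 5" by simp
  show ?thesis unfolding is_cycle_def V_eq l all5
  by (simp add: all5 E_mem El_def Ep_def Vl_def del: One_nat_def)
qed

theorem mainTheorem13:
  shows "odd_girth groetzsch_V groetzsch_E = 5 \<and>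
    (\<exists>D. is_orientation groetzsch_E D \<and>
       (\<forall>cs. is_cycle groetzsch_V groetzsch_E cs \<and> length cs = 5 \<longrightarrow> alternating D cs))"
proof
  show "odd_girth groetzsch_V groetzsch_E = 5"
    unfolding odd_girth_def
  proof (rule Least_equality)
    show "odd (5::nat) \<and> (\<exists>cs. is_cycle groetzsch_V groetzsch_E cs \<and> length cs = 5)"
      using ex5 by force
  next
    fix k :: nat assume k: "odd k \<and> (\<exists>cs. is_cycle groetzsch_V groetzsch_E cs \<and> length cs = k)"
    then obtain cs where cs: "is_cycle groetzsch_V groetzsch_E cs" "length cs = k" by blast
    have "k \<ge> 3" using cs unfolding is_cycle_def by auto
    moreover have "k \<noteq> 3" using no_tri cs by blast
    moreover have "k \<noteq> 4" using k by auto
    ultimately show "5 \<le> k" by auto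
  qed
next
  show "\<exists>D. is_orientation groetzsch_E D \<and>
       (\<forall>cs. is_cycle groetzsch_V groetzsch_E cs \<and> length cs = 5 \<longrightarrow> alternating D cs)"
    using orient cyc5_alt by blast
qed

end
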